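(* Let $\mu$ be a probability measure on $\mathbb{R}^d$ and $\nu=\sum_{i=1}^M w_i\delta_{y_i}$ a discrete probability measure ($w_i>0$, $\sum_i w_i=1$), and let $c:\mathbb{R}^d\times\mathbb{R}^d\to[0,\infty)$ be a nonnegative cost. Suppose that the optimal transport problem between $\mu$ and $\nu$ with cost $c$ is well-posed, that strong duality holds, and that the semi-dual problem $\min_{\mathbf g\in\mathbb{R}^M} H(\mathbf g)$ admits a minimum. Let $K\subset\mathbb{R}^d$ be any compact set with $\mu(K)\ge 1-\frac12\min_j w_j$. Then there exists a minimizer $\mathbf g^*$ of $H$ contained in $$\mathcal C:=\{\mathbf g\in\mathbb{R}^M : |g_j|\le \|c\|_{K,\infty}\ \text{for all } j\},\qquad \|c\|_{K,\infty}:=\sup_{x\in K,\ j\in\{1,\dots,M\}}|c(x,y_j)|.$$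
   Context: For $\mathbf g=(g_1,\dots,g_M)\in\mathbb{R}^M$, the $c$-transform is $\mathbf g^c(x)=\min_{1\le i\le M}\{c(x,y_i)-g_i\}$, and the (convex) semi-dual objective is $H(\mathbf g)=\mathbb{E}_{X\sim\mu}[-\mathbf g^c(X)]-\sum_{j=1}^M w_jg_j$. Its minimum value equals minus the optimal transport cost $\min_{\pi\in\Pi(\mu,\nu)}\int c\,d\pi$ (up to the sign convention). Laguerre cells: $\mathbb L_j(\mathbf g)=\{x:\mathbf g^c(x)=c(x,y_j)-g_j\}$. *)

theory Defs
  imports "HOL-Probability.Probability"
begin

text \<open>Target points y 0, ..., y (M-1) (0-indexed), weights w, dual vector g :: nat => real
  (only the entries g 0, ..., g (M-1) matter).\<close>

definition ctrans :: "('a \<Rightarrow> 'a \<Rightarrow> real) \<Rightarrow> (nat \<Rightarrow> 'a) \<Rightarrow> nat \<Rightarrow> (nat \<Rightarrow> real) \<Rightarrow> 'a \<Rightarrow> real" where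
  "ctrans c y M g x = (MIN i\<in>{..<M}. c x (y i) - g i)"

definition semidual :: "'a measure \<Rightarrow> ('a \<Rightarrow> 'a \<Rightarrow> real) \<Rightarrow> (nat \<Rightarrow> 'a) \<Rightarrow> (nat \<Rightarrow> real) \<Rightarrow> nat
    \<Rightarrow> (nat \<Rightarrow> real) \<Rightarrow> real" where
  "semidual \<mu> c y w M g = (\<integral>x. - ctrans c y M g x \<partial>\<mu>) - (\<Sum>j<M. w j * g j)"

definition disc_measure :: "(nat \<Rightarrow> real) \<Rightarrow> (nat \<Rightarrow> 'a::topological_space) \<Rightarrow> nat \<Rightarrow> 'a measure" where
  "disc_measure w y M = measure_of UNIV (sets borel) (\<lambda>A. \<Sum>j<M. ennreal (w j) * indicator A (y j))"

definition couplings :: "'a::topological_space measure \<Rightarrow> 'a measure \<Rightarrow> ('a \<times> 'a) measure set" where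
  "couplings \<mu> \<nu> = {\<pi>. prob_space \<pi> \<and> sets \<pi> = sets (borel :: ('a \<times> 'a) measure)
      \<and> distr \<pi> borel fst = \<mu> \<and> distr \<pi> borel snd = \<nu>}"

definition ot_cost :: "'a::topological_space measure \<Rightarrow> 'a measure \<Rightarrow> ('a \<Rightarrow> 'a \<Rightarrow> real) \<Rightarrow> ennreal" where
  "ot_cost \<mu> \<nu> c = (INF \<pi>\<in>couplings \<mu> \<nu>. \<integral>\<^sup>+ p. ennreal (c (fst p) (snd p)) \<partial>\<pi>)"

end

theory Submission
  imports Defs
begin

lemma c_col_meas:
  fixes c :: "'a::euclidean_space \<Rightarrow> 'a \<Rightarrow> real"
  assumes sets_mu: "sets \<mu> = sets borel"
    and c_meas: "(\<lambda>p. c (fst p) (snd p)) \<in> borel_measurable borel"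
  shows "(\<lambda>x. c x a) \<in> borel_measurable \<mu>"
proof -
  have "(\<lambda>x. (x, a)) \<in> borel_measurable (borel :: 'a measure)"
    by (intro borel_measurable_continuous_onI continuous_intros)
  from measurable_compose[OF this c_meas] have "(\<lambda>x. c x a) \<in> borel_measurable borel" by simp
  then show ?thesis using measurable_cong_sets[OF sets_mu refl] by blast
qed

lemma ctrans_meas:
  fixes c :: "'a::euclidean_space \<Rightarrow> 'a \<Rightarrow> real"
  assumes sets_mu: "sets \<mu> = sets borel"
    and c_meas: "(\<lambda>p. c (fst p) (snd p)) \<in> borel_measurable borel"
  shows "(\<lambda>x. ctrans c y M g x) \<in> borel_measurable \<mu>"
  unfolding ctrans_def
  by (intro borel_measurable_Min borel_measurable_diff c_col_meas[OF sets_mu c_meas]) auto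

lemma ctrans_shift:
  assumes "M \<ge> 1"
  shows "ctrans c y M (\<lambda>i. g i + t) x = ctrans c y M g x - t"
proof -
  have "ctrans c y M (\<lambda>i. g i + t) x = (MIN i\<in>{..<M}. (c x (y i) - g i) + (- t))"
    unfolding ctrans_def by (simp add: algebra_simps)
  also have "\<dots> = ctrans c y M g x - t"
    unfolding ctrans_def using assms by (subst Min_add_commute) (auto simp: lessThan_empty_iff)
  finally show ?thesis .
qed

lemma ctrans_upd:
  assumes "j < M" "t \<ge> 0"
  shows "ctrans c y M (g(j := g j + t)) x = min (ctrans c y M g x) (c x (y j) - g j - t)"
proof -
  have fin: "finite {..<M}" and ne: "{..<M} \<noteq> {}" using assms by auto
  have a: "ctrans c y M (g(j := g j + t)) x \<le> c x (y j) - g j - t"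
    unfolding ctrans_def using assms by (subst Min_le_iff) (auto intro!: bexI[of _ j])
  have b: "ctrans c y M (g(j := g j + t)) x \<le> ctrans c y M g x"
  proof -
    obtain i where i: "i < M" "ctrans c y M g x = c x (y i) - g i"
    proof -
      have "ctrans c y M g x \<in> (\<lambda>i. c x (y i) - g i) ` {..<M}"
        unfolding ctrans_def using fin ne by (intro Min_in) auto
      then show ?thesis using that by auto
    qed
    have "ctrans c y M (g(j := g j + t)) x \<le> c x (y i) - (g(j := g j + t)) i"
      unfolding ctrans_def using i fin by (intro Min_le) auto
    also have "\<dots> \<le> c x (y i) - g i" using assms by auto
    finally show ?thesis using i by simp
  qed
  have d: "min (ctrans c y M g x) (c x (y j) - g j - t) \<le> ctrans c y M (g(j := g j + t)) x"
    unfolding ctrans_def using assms fin ne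
    by (subst Min_ge_iff) (auto simp: min_le_iff_disj Min_le_iff)
  show ?thesis using a b d by linarith
qed


lemma ctrans_integrable:
  fixes c :: "'a::euclidean_space \<Rightarrow> 'a \<Rightarrow> real"
  assumes prob: "prob_space \<mu>" and sets_mu: "sets \<mu> = sets borel"
    and c_meas: "(\<lambda>p. c (fst p) (snd p)) \<in> borel_measurable borel"
    and M_pos: "M \<ge> 1" and w_sum: "(\<Sum>j<M. w j) = 1"
    and min: "\<forall>g'. semidual \<mu> c y w M g \<le> semidual \<mu> c y w M g'"
  shows "integrable \<mu> (\<lambda>x. ctrans c y M g x)"
proof (rule ccontr)
  assume ni: "\<not> integrable \<mu> (\<lambda>x. ctrans c y M g x)"
  interpret prob_space \<mu> by fact
  define g1 where "g1 = (\<lambda>i. g i + 1)"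
  have sh: "\<And>x. ctrans c y M g1 x = ctrans c y M g x - 1"
    unfolding g1_def by (rule ctrans_shift[OF M_pos])
  have ni1: "\<not> integrable \<mu> (\<lambda>x. - ctrans c y M g1 x)"
  proof
    assume "integrable \<mu> (\<lambda>x. - ctrans c y M g1 x)"
    then have "integrable \<mu> (\<lambda>x. - ctrans c y M g1 x - 1)" by auto
    then have "integrable \<mu> (\<lambda>x. - (ctrans c y M g x))" by (simp add: sh)
    then show False using ni by simp
  qed
  have ni0: "\<not> integrable \<mu> (\<lambda>x. - ctrans c y M g x)" using ni by simp
  have "(\<Sum>j<M. w j * g1 j) = (\<Sum>j<M. w j * g j) + 1"
    unfolding g1_def by (simp add: algebra_simps sum.distrib w_sum)
  then have "semidual \<mu> c y w M g1 = semidual \<mu> c y w M g - 1"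
    unfolding semidual_def using not_integrable_integral_eq[OF ni1] not_integrable_integral_eq[OF ni0]
    by simp
  then show False using min by (metis diff_less_eq less_add_one linorder_not_less)
qed

lemma semidual_shift:
  fixes c :: "'a::euclidean_space \<Rightarrow> 'a \<Rightarrow> real"
  assumes prob: "prob_space \<mu>"
    and M_pos: "M \<ge> 1" and w_sum: "(\<Sum>j<M. w j) = 1"
    and int: "integrable \<mu> (\<lambda>x. ctrans c y M g x)"
  shows "semidual \<mu> c y w M (\<lambda>i. g i + t) = semidual \<mu> c y w M g"
proof -
  interpret prob_space \<mu> by fact
  have "(\<integral>x. - ctrans c y M (\<lambda>i. g i + t) x \<partial>\<mu>) = (\<integral>x. - ctrans c y M g x + t \<partial>\<mu>)"
    by (intro Bochner_Integration.integral_cong) (simp_all add: ctrans_shift[OF M_pos])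
  also have "\<dots> = (\<integral>x. - ctrans c y M g x \<partial>\<mu>) + t"
    using int by (subst Bochner_Integration.integral_add) (auto simp: prob_space)
  finally have i: "(\<integral>x. - ctrans c y M (\<lambda>i. g i + t) x \<partial>\<mu>) = (\<integral>x. - ctrans c y M g x \<partial>\<mu>) + t" .
  have "(\<Sum>j<M. w j * (g j + t)) = (\<Sum>j<M. w j * g j) + t"
    by (simp add: algebra_simps sum.distrib w_sum flip: sum_distrib_left)
  then show ?thesis unfolding semidual_def i by simp
qed


lemma cell_mass_t:
  fixes c :: "'a::euclidean_space \<Rightarrow> 'a \<Rightarrow> real"
  assumes prob: "prob_space \<mu>" and sets_mu: "sets \<mu> = sets borel"
    and c_meas: "(\<lambda>p. c (fst p) (snd p)) \<in> borel_measurable borel"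
    and M_pos: "M \<ge> 1" and w_sum: "(\<Sum>j<M. w j) = 1"
    and min: "\<forall>g'. semidual \<mu> c y w M g \<le> semidual \<mu> c y w M g'"
    and j: "j < M" and t: "t > 0"
  shows "w j \<le> measure \<mu> {x. c x (y j) - g j < ctrans c y M g x + t}"
proof -
  interpret prob_space \<mu> by fact
  have sp: "space \<mu> = UNIV" using sets_eq_imp_space_eq[OF sets_mu] by simp
  define f where "f = (\<lambda>x. ctrans c y M g x)"
  define h where "h = (\<lambda>x. c x (y j) - g j)"
  define d where "d = (\<lambda>x. max 0 (f x - h x + t))"
  define A where "A = {x. h x < f x + t}"
  have fm: "f \<in> borel_measurable \<mu>" unfolding f_def by (rule ctrans_meas[OF sets_mu c_meas])
  have hm: "h \<in> borel_measurable \<mu>" unfolding h_def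
    by (intro borel_measurable_diff c_col_meas[OF sets_mu c_meas]) auto
  have dm: "d \<in> borel_measurable \<mu>" unfolding d_def using fm hm by measurable
  have fi: "integrable \<mu> f" unfolding f_def by (rule ctrans_integrable[OF prob sets_mu c_meas M_pos w_sum min])
  have A_sets: "A \<in> sets \<mu>"
    using borel_measurable_less[OF hm borel_measurable_add[OF fm borel_measurable_const]] sp
    unfolding A_def by simp
  have fh: "f x \<le> h x" for x
    unfolding f_def h_def ctrans_def using j by (intro Min_le) auto
  have d_le: "d x \<le> t * indicator A x" for x
    using fh[of x] t unfolding d_def A_def by (auto simp: indicator_def)
  have d_ge: "0 \<le> d x" for x unfolding d_def by simp
  have di: "integrable \<mu> d"
    by (rule Bochner_Integration.integrable_bound[where f="\<lambda>x. t", OF _ dm])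
       (use fh d_ge t in \<open>auto intro!: AE_I2 simp: d_def\<close>)
  define gt where "gt = g(j := g j + t)"
  have ft: "ctrans c y M gt x = f x - d x" for x
    unfolding gt_def f_def d_def h_def using ctrans_upd[OF j, of t c y g x] t by auto
  have "(\<integral>x. - ctrans c y M gt x \<partial>\<mu>) = (\<integral>x. - f x + d x \<partial>\<mu>)"
    by (simp add: ft)
  also have "\<dots> = (\<integral>x. - f x \<partial>\<mu>) + (\<integral>x. d x \<partial>\<mu>)"
    using fi di by (subst Bochner_Integration.integral_add) auto
  finally have i1: "(\<integral>x. - ctrans c y M gt x \<partial>\<mu>) = (\<integral>x. - f x \<partial>\<mu>) + (\<integral>x. d x \<partial>\<mu>)" .
  have "(\<Sum>i<M. w i * gt i) = (\<Sum>i<M. w i * g i + (if i = j then w j * t else 0))"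
    unfolding gt_def by (intro sum.cong) (auto simp: algebra_simps)
  also have "\<dots> = (\<Sum>i<M. w i * g i) + w j * t"
    using j by (simp add: sum.distrib)
  finally have s1: "(\<Sum>i<M. w i * gt i) = (\<Sum>i<M. w i * g i) + w j * t" .
  have "semidual \<mu> c y w M g \<le> semidual \<mu> c y w M gt" using min by blast
  then have "w j * t \<le> (\<integral>x. d x \<partial>\<mu>)"
    unfolding semidual_def i1 s1 f_def by simp
  also have "\<dots> \<le> (\<integral>x. t * indicator A x \<partial>\<mu>)"
    using di A_sets d_le by (intro integral_mono) (auto simp: emeasure_eq_measure)
  also have "\<dots> = t * measure \<mu> A"
    using sp by simp
  finally have "w j * t \<le> t * measure \<mu> A" .
  then show ?thesis using t unfolding A_def h_def f_def by (simp add: mult.commute)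
qed


lemma cell_mass:
  fixes c :: "'a::euclidean_space \<Rightarrow> 'a \<Rightarrow> real"
  assumes prob: "prob_space \<mu>" and sets_mu: "sets \<mu> = sets borel"
    and c_meas: "(\<lambda>p. c (fst p) (snd p)) \<in> borel_measurable borel"
    and M_pos: "M \<ge> 1" and w_sum: "(\<Sum>j<M. w j) = 1"
    and min: "\<forall>g'. semidual \<mu> c y w M g \<le> semidual \<mu> c y w M g'"
    and j: "j < M"
  shows "w j \<le> measure \<mu> {x. c x (y j) - g j \<le> ctrans c y M g x}"
proof -
  interpret prob_space \<mu> by fact
  have sp: "space \<mu> = UNIV" using sets_eq_imp_space_eq[OF sets_mu] by simp
  define f where "f = (\<lambda>x. ctrans c y M g x)"
  define h where "h = (\<lambda>x. c x (y j) - g j)"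
  have fm: "f \<in> borel_measurable \<mu>" unfolding f_def by (rule ctrans_meas[OF sets_mu c_meas])
  have hm: "h \<in> borel_measurable \<mu>" unfolding h_def
    by (intro borel_measurable_diff c_col_meas[OF sets_mu c_meas]) auto
  define A where "A = (\<lambda>n::nat. {x. h x < f x + 1 / Suc n})"
  have As: "range A \<subseteq> sets \<mu>"
  proof
    fix B assume "B \<in> range A"
    then obtain n where "B = A n" by auto
    then show "B \<in> sets \<mu>"
      using borel_measurable_less[OF hm borel_measurable_add[OF fm borel_measurable_const]] sp
      unfolding A_def by simp
  qed
  have dec: "decseq A"
  proof (rule decseq_SucI)
    fix n
    have "1 / real (Suc (Suc n)) \<le> 1 / Suc n" by (simp add: frac_le)
    then show "A (Suc n) \<subseteq> A n" unfolding A_def by auto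
  qed
  have inter: "(\<Inter>n. A n) = {x. h x \<le> f x}"
  proof (intro set_eqI iffI)
    fix x assume x: "x \<in> (\<Inter>n. A n)"
    show "x \<in> {x. h x \<le> f x}"
    proof (rule ccontr)
      assume "x \<notin> {x. h x \<le> f x}"
      then have "h x - f x > 0" by simp
      then obtain n where "inverse (real (Suc n)) < h x - f x"
        using reals_Archimedean by blast
      moreover have "x \<in> A n" using x by auto
      ultimately show False unfolding A_def by (simp add: field_simps)
    qed
  next
    fix x assume "x \<in> {x. h x \<le> f x}"
    then show "x \<in> (\<Inter>n. A n)" unfolding A_def
      by (auto intro: add_pos_pos le_less_trans[of _ "f x"])
  qed
  have lim: "(\<lambda>n. measure \<mu> (A n)) \<longlonglongrightarrow> measure \<mu> {x. h x \<le> f x}"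
    using finite_Lim_measure_decseq[OF As dec] inter by simp
  have "w j \<le> measure \<mu> (A n)" for n
    unfolding A_def f_def h_def by (rule cell_mass_t[OF prob sets_mu c_meas M_pos w_sum min j]) simp
  then have "w j \<le> measure \<mu> {x. h x \<le> f x}"
    by (intro LIMSEQ_le_const[OF lim]) auto
  then show ?thesis unfolding h_def f_def .
qed

theorem lemma3p1:
  fixes \<mu> :: "'a::euclidean_space measure"
    and c :: "'a \<Rightarrow> 'a \<Rightarrow> real"
    and y :: "nat \<Rightarrow> 'a" and w :: "nat \<Rightarrow> real" and M :: nat
    and K :: "'a set"
  assumes prob: "prob_space \<mu>" and sets_mu: "sets \<mu> = sets borel"
    and M_pos: "M \<ge> 1"
    and w_pos: "\<forall>j<M. w j > 0" and w_sum: "(\<Sum>j<M. w j) = 1"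
    and c_nonneg: "\<forall>x z. c x z \<ge> 0"
    and c_meas: "(\<lambda>p. c (fst p) (snd p)) \<in> borel_measurable borel"
    and well_posed: "ot_cost \<mu> (disc_measure w y M) c < \<infinity>"
      "\<exists>\<pi>\<in>couplings \<mu> (disc_measure w y M).
          (\<integral>\<^sup>+ p. ennreal (c (fst p) (snd p)) \<partial>\<pi>) = ot_cost \<mu> (disc_measure w y M) c"
    and strong_duality: "(INF g. ereal (semidual \<mu> c y w M g))
                           = - enn2ereal (ot_cost \<mu> (disc_measure w y M) c)"
    and has_min: "\<exists>g. \<forall>g'. semidual \<mu> c y w M g \<le> semidual \<mu> c y w M g'"
    and K_compact: "compact K"
    and K_mass: "measure \<mu> K \<ge> 1 - Min (w ` {..<M}) / 2"
  shows "\<exists>g. (\<forall>g'. semidual \<mu> c y w M g \<le> semidual \<mu> c y w M g')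
            \<and> (\<forall>j<M. ereal \<bar>g j\<bar> \<le> (SUP p\<in>K \<times> {..<M}. ereal \<bar>c (fst p) (y (snd p))\<bar>))"
proof -
  interpret prob_space \<mu> by fact
  have sp: "space \<mu> = UNIV" using sets_eq_imp_space_eq[OF sets_mu] by simp
  obtain g where min: "\<forall>g'. semidual \<mu> c y w M g \<le> semidual \<mu> c y w M g'"
    using has_min by blast
  have fin: "finite {..<M}" and ne: "{..<M} \<noteq> {}" using M_pos by (auto simp: lessThan_empty_iff)
  obtain k where k: "k < M" "\<And>i. i < M \<Longrightarrow> g k \<le> g i"
  proof -
    have "Min (g ` {..<M}) \<in> g ` {..<M}" using fin ne by (intro Min_in) auto
    then obtain k where "k < M" "g k = Min (g ` {..<M})" by auto
    then show ?thesis using that fin by (metis Min_le finite_imageI image_eqI lessThan_iff)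
  qed
  define L where "L = {x. c x (y k) - g k \<le> ctrans c y M g x}"
  have Lm: "w k \<le> measure \<mu> L"
    unfolding L_def by (rule cell_mass[OF prob sets_mu c_meas M_pos w_sum min k(1)])
  have Ls: "L \<in> sets \<mu>"
    unfolding L_def using borel_measurable_le[OF
      borel_measurable_diff[OF c_col_meas[OF sets_mu c_meas] borel_measurable_const]
      ctrans_meas[OF sets_mu c_meas]] sp by simp
  have Ks: "K \<in> sets \<mu>"
    using sets_mu compact_imp_closed[OF K_compact] by (simp add: borel_closed)
  have wmin: "Min (w ` {..<M}) \<le> w k" using fin k(1) by (intro Min_le) auto
  have wpos: "w k > 0" using w_pos k(1) by auto
  have "measure \<mu> L \<le> measure \<mu> (L \<inter> K) + measure \<mu> (L - K)"
    using Ls Ks by (metis Int_Diff_Un measure_Un_le sets.Diff sets.Int)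
  moreover have "measure \<mu> (L - K) \<le> measure \<mu> (space \<mu> - K)"
    using Ls Ks sets.compl_sets[OF Ks] sp by (intro finite_measure_mono) auto
  moreover have "measure \<mu> (space \<mu> - K) = 1 - measure \<mu> K"
    using Ks prob_compl by simp
  ultimately have "measure \<mu> (L \<inter> K) > 0" using Lm K_mass wmin wpos by linarith
  then obtain x0 where x0: "x0 \<in> L" "x0 \<in> K" by (metis Int_iff equals0I measure_empty less_irrefl)
  have bnd: "g i - g k \<le> c x0 (y i)" if i: "i < M" for i
  proof -
    have "ctrans c y M g x0 \<le> c x0 (y i) - g i"
      unfolding ctrans_def using i fin by (intro Min_le) auto
    then show ?thesis using x0(1) c_nonneg unfolding L_def
      by (smt (verit) mem_Collect_eq)
  qed
  define gs where "gs = (\<lambda>i. g i + (- g k))"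
  have int: "integrable \<mu> (\<lambda>x. ctrans c y M g x)"
    by (rule ctrans_integrable[OF prob sets_mu c_meas M_pos w_sum min])
  have eq: "semidual \<mu> c y w M gs = semidual \<mu> c y w M g"
    unfolding gs_def by (rule semidual_shift[OF prob M_pos w_sum int])
  show ?thesis
  proof (intro exI conjI allI impI)
    show "semidual \<mu> c y w M gs \<le> semidual \<mu> c y w M g'" for g'
      using eq min by simp
  next
    fix j assume j: "j < M"
    have "\<bar>gs j\<bar> = g j - g k" unfolding gs_def using k(2)[OF j] by simp
    also have "\<dots> \<le> \<bar>c x0 (y j)\<bar>" using bnd[OF j] by simp
    finally have "ereal \<bar>gs j\<bar> \<le> ereal \<bar>c (fst (x0, j)) (y (snd (x0, j)))\<bar>" by simp
    also have "\<dots> \<le> (SUP p\<in>K \<times> {..<M}. ereal \<bar>c (fst p) (y (snd p))\<bar>)"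
      using x0(2) j by (intro SUP_upper) auto
    finally show "ereal \<bar>gs j\<bar> \<le> (SUP p\<in>K \<times> {..<M}. ereal \<bar>c (fst p) (y (snd p))\<bar>)" .
  qed
qed

end
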